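(* Let $r_n\to\infty$ and let $\{c_{s,n}\}_{n\ge1,1\le s\le r_n}$ be a triangular array of reals such that (a) $|c_{1,n}|\ge|c_{2,n}|\ge\cdots\ge|c_{r_n,n}|$ for each $n$ and $\sup_n\sum_{s=1}^{r_n}c_{s,n}^2\le L$ for some $L>0$; (b) $\lim_{n\to\infty}c_{s,n}=c_s$ for each $s\ge1$; (c) $\lim_{K\to\infty}\limsup_{n\to\infty}\sum_{s=K+1}^{r_n}c_{s,n}^2=\lim_{K\to\infty}\liminf_{n\to\infty}\sum_{s=K+1}^{r_n}c_{s,n}^2=\rho^2$ (with $\rho\ge0$). Let $\{Y_s\}_{s\ge1}$ be i.i.d. with mean $0$ and variance $1$, and $X_n:=\sum_{s=1}^{r_n}c_{s,n}Y_s$. Then $\sum_{s=1}^\infty c_sY_s$ is a well-defined random variable and $X_n$ converges weakly to $X:=\sum_{s=1}^\infty c_sY_s+\rho Z$, where $Z\sim N(0,1)$ is independent of $\{Y_s\}$. *)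

theory Defs
  imports "HOL-Probability.Probability"
begin

end

theory Submission
  imports Defs "HOL-Probability.Probability"
begin

lemma (in prob_space) sq_int_int:
  fixes Z :: "'a \<Rightarrow> real"
  assumes "random_variable borel Z" "integrable M (\<lambda>x. (Z x)^2)"
  shows "integrable M Z"
  using square_integrable_imp_integrable[OF assms] .

lemma (in prob_space) prod_int:
  fixes X Z :: "'a \<Rightarrow> real"
  assumes [measurable]: "X \<in> borel_measurable M" "Z \<in> borel_measurable M"
   and "integrable M (\<lambda>x. (X x)^2)" "integrable M (\<lambda>x. (Z x)^2)"
  shows "integrable M (\<lambda>x. X x * Z x)"
proof (rule Bochner_Integration.integrable_bound[where f="\<lambda>x. (X x)^2 + (Z x)^2"])
  show "integrable M (\<lambda>x. (X x)^2 + (Z x)^2)" using assms by auto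
  show "AE x in M. norm (X x * Z x) \<le> norm ((X x)^2 + (Z x)^2)"
  proof (intro AE_I2)
    fix x
    have h: "2 * (\<bar>X x\<bar> * \<bar>Z x\<bar>) \<le> (X x)^2 + (Z x)^2"
      using sum_squares_bound[of "\<bar>X x\<bar>" "\<bar>Z x\<bar>"] by (simp add: mult.assoc)
    have h2: "0 \<le> \<bar>X x\<bar> * \<bar>Z x\<bar>" by simp
    have "\<bar>X x * Z x\<bar> \<le> (X x)^2 + (Z x)^2"
      unfolding abs_mult using h h2 by linarith
    then show "norm (X x * Z x) \<le> norm ((X x)^2 + (Z x)^2)" by simp
  qed
qed simp

lemma int_ind_mult:
  fixes f :: "'a \<Rightarrow> real"
  shows "A \<in> sets M \<Longrightarrow> integrable M f \<Longrightarrow> integrable M (\<lambda>x. indicator A x * f x)"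
  using integrable_real_mult_indicator[of A M f] by (simp add: mult_ac)

lemma meas_sumPi:
  assumes "S \<subseteq> A"
  shows "(\<lambda>f. \<Sum>i\<in>S. f i) \<in> borel_measurable (PiM A (\<lambda>_. borel::real measure))"
proof (rule borel_measurable_sum)
  fix i assume "i \<in> S"
  then have "i \<in> A" using assms by auto
  then show "(\<lambda>f. f i) \<in> borel_measurable (PiM A (\<lambda>_. borel))"
    by (intro measurable_component_singleton) auto
qed

lemma (in prob_space) kolm_orth:
  fixes Z :: "nat \<Rightarrow> 'a \<Rightarrow> real"
  assumes indep: "indep_vars (\<lambda>_. borel) Z I"
    and int2: "\<And>i. i \<in> I \<Longrightarrow> integrable M (\<lambda>x. (Z i x)^2)"
    and mean: "\<And>i. i \<in> I \<Longrightarrow> expectation (Z i) = 0"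
    and AB: "A \<subseteq> I" "B \<subseteq> I" "A \<inter> B = {}" "finite B"
    and g: "g \<in> borel_measurable (PiM A (\<lambda>_. borel))"
    and Gint: "integrable M G"
    and Geq: "\<And>x. x \<in> space M \<Longrightarrow> G x = g (restrict (\<lambda>i. Z i x) A)"
  shows "integrable M (\<lambda>x. G x * (\<Sum>j\<in>B. Z j x))"
    "expectation (\<lambda>x. G x * (\<Sum>j\<in>B. Z j x)) = 0"
proof -
  have rv: "random_variable borel (Z i)" if "i \<in> I" for i
    using indep that unfolding indep_vars_def by auto
  have iZ: "integrable M (Z i)" if "i \<in> I" for i
    using sq_int_int[OF rv int2] that by auto
  have gint: "integrable M (\<lambda>x. g (restrict (\<lambda>i. Z i x) A))"
    using Gint by (rule Bochner_Integration.integrable_cong[THEN iffD1, OF refl Geq, rotated]) 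
  have "indep_var borel (g \<circ> (\<lambda>\<omega>. restrict (\<lambda>i. Z i \<omega>) A)) borel ((\<lambda>f. \<Sum>j\<in>B. f j) \<circ> (\<lambda>\<omega>. restrict (\<lambda>i. Z i \<omega>) B))"
    using AB by (intro indep_var_compose[OF indep_var_restrict[OF indep]] g) auto
  also have "((\<lambda>f. \<Sum>j\<in>B. f j) \<circ> (\<lambda>\<omega>. restrict (\<lambda>i. Z i \<omega>) B)) = (\<lambda>\<omega>. \<Sum>j\<in>B. Z j \<omega>)"
    by (auto cong: rev_conj_cong)
  finally have ind: "indep_var borel (\<lambda>x. g (restrict (\<lambda>i. Z i x) A)) borel (\<lambda>\<omega>. \<Sum>j\<in>B. Z j \<omega>)"
    unfolding comp_def .
  have sint: "integrable M (\<lambda>x. \<Sum>j\<in>B. Z j x)"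
    by (rule Bochner_Integration.integrable_sum) (use AB iZ in auto)
  have "integrable M (\<lambda>x. g (restrict (\<lambda>i. Z i x) A) * (\<Sum>j\<in>B. Z j x))"
    by (rule indep_var_integrable[OF ind gint sint])
  then show "integrable M (\<lambda>x. G x * (\<Sum>j\<in>B. Z j x))"
    by (rule Bochner_Integration.integrable_cong[THEN iffD1, OF refl, rotated]) (simp add: Geq)
  have "expectation (\<lambda>x. G x * (\<Sum>j\<in>B. Z j x)) = expectation (\<lambda>x. g (restrict (\<lambda>i. Z i x) A) * (\<Sum>j\<in>B. Z j x))"
    by (rule Bochner_Integration.integral_cong) (simp_all add: Geq)
  also have "\<dots> = expectation (\<lambda>x. g (restrict (\<lambda>i. Z i x) A)) * expectation (\<lambda>x. \<Sum>j\<in>B. Z j x)"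
    by (rule indep_var_lebesgue_integral[OF ind gint sint])
  also have "expectation (\<lambda>x. \<Sum>j\<in>B. Z j x) = 0"
    using AB iZ mean by (subst Bochner_Integration.integral_sum) (auto intro!: sum.neutral)
  finally show "expectation (\<lambda>x. G x * (\<Sum>j\<in>B. Z j x)) = 0" by simp
qed

lemma (in prob_space) kolmogorov_ineq:
  fixes Z :: "nat \<Rightarrow> 'a \<Rightarrow> real"
  assumes indep: "indep_vars (\<lambda>_. borel) Z I"
    and int2: "\<And>i. i \<in> I \<Longrightarrow> integrable M (\<lambda>x. (Z i x)^2)"
    and mean: "\<And>i. i \<in> I \<Longrightarrow> expectation (Z i) = 0"
    and sub: "{m..<n} \<subseteq> I" and e: "e > 0"
  shows "prob {x \<in> space M. \<exists>k\<in>{m..n}. e \<le> \<bar>\<Sum>i\<in>{m..<k}. Z i x\<bar>}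
     \<le> (\<Sum>i\<in>{m..<n}. expectation (\<lambda>x. (Z i x)^2)) / e^2"
proof -
  have rv[measurable]: "Z i \<in> borel_measurable M" if "i \<in> I" for i
    using indep that unfolding indep_vars_def by auto
  have iZ: "integrable M (Z i)" if "i \<in> I" for i
    using sq_int_int[OF rv int2] that by auto
  have iind: "integrable M (indicator A :: 'a \<Rightarrow> real)" if "A \<in> sets M" for A
    using that by (intro integrable_real_indicator) (auto simp: less_top[symmetric])
  define T where "T k x = (\<Sum>i\<in>{m..<k}. Z i x)" for k x
  have Tm[measurable]: "T k \<in> borel_measurable M" if "k \<le> n" for k
    unfolding T_def by (rule borel_measurable_sum) (use sub that in \<open>auto intro!: rv\<close>)
  have iprod: "integrable M (\<lambda>x. Z i x * Z j x)" if "i\<in>I" "j\<in>I" for i j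
    using prod_int[OF rv rv int2 int2] that by auto
  have T2int: "integrable M (\<lambda>x. (T k x)^2)" if "k \<le> n" for k
  proof -
    have "(\<lambda>x. (T k x)^2) = (\<lambda>x. \<Sum>i\<in>{m..<k}. \<Sum>j\<in>{m..<k}. Z i x * Z j x)"
      unfolding T_def power2_eq_square by (simp add: sum_product)
    moreover have "integrable M (\<lambda>x. \<Sum>i\<in>{m..<k}. \<Sum>j\<in>{m..<k}. Z i x * Z j x)"
      by (intro Bochner_Integration.integrable_sum iprod) (use sub that in auto)
    ultimately show ?thesis by simp
  qed
  have Tint: "integrable M (T k)" if "k \<le> n" for k
    using sq_int_int[OF Tm T2int] that by auto
  have ET2: "expectation (\<lambda>x. (T k x)^2) = (\<Sum>i\<in>{m..<k}. expectation (\<lambda>x. (Z i x)^2))" if "k \<le> n" for k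
    using that
  proof (induction k)
    case 0 then show ?case by (simp add: T_def)
  next
    case (Suc k)
    show ?case
    proof (cases "k < m")
      case True then show ?thesis by (simp add: T_def)
    next
      case False
      then have kI: "k \<in> I" using sub Suc.prems by auto
      have TS: "T (Suc k) x = T k x + (\<Sum>j\<in>{k}. Z j x)" for x using False by (simp add: T_def)
      have Gi: "integrable M (T k)" using Tint Suc.prems by auto
      have gm0: "(\<lambda>f. \<Sum>i\<in>{m..<k}. f i) \<in> borel_measurable (PiM {m..<k} (\<lambda>_. borel::real measure))" by (rule meas_sumPi) auto
      have Geq0: "\<And>x. x \<in> space M \<Longrightarrow> T k x = (\<lambda>f. \<Sum>i\<in>{m..<k}. f i) (restrict (\<lambda>i. Z i x) {m..<k})"
        by (auto simp: T_def intro!: sum.cong)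
      have s1: "{m..<k} \<subseteq> I" using sub Suc.prems by auto
      have s2: "{k} \<subseteq> I" using kI by auto
      have s3: "{m..<k} \<inter> {k} = {}" by auto
      note orth = kolm_orth[OF indep int2 mean s1 s2 s3 finite.insertI[OF finite.emptyI] gm0 Gi Geq0]
      have "expectation (\<lambda>x. (T (Suc k) x)^2) = expectation (\<lambda>x. (T k x)^2 + 2 * (T k x * (\<Sum>j\<in>{k}. Z j x)) + (Z k x)^2)"
        unfolding TS by (rule Bochner_Integration.integral_cong) (simp_all add: power2_eq_square algebra_simps)
      also have "\<dots> = expectation (\<lambda>x. (T k x)^2) + 2 * expectation (\<lambda>x. T k x * (\<Sum>j\<in>{k}. Z j x)) + expectation (\<lambda>x. (Z k x)^2)"
        using T2int[of k] orth(1) int2[OF kI] Suc.prems by simp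
      also have "\<dots> = (\<Sum>i\<in>{m..<Suc k}. expectation (\<lambda>x. (Z i x)^2))"
        using Suc False orth(2) by simp
      finally show ?thesis .
    qed
  qed
  define Ak where "Ak k = {x\<in>space M. e \<le> \<bar>T k x\<bar> \<and> (\<forall>j\<in>{m..<k}. \<bar>T j x\<bar> < e)}" for k
  have Ak_sets: "Ak k \<in> sets M" if "k \<le> n" for k
  proof -
    have [measurable]: "Measurable.pred M (\<lambda>x. \<forall>j\<in>{m..<k}. \<bar>T j x\<bar> < e)"
      by (rule pred_intros_finite(3)) (use that in auto)
    show ?thesis unfolding Ak_def using that by measurable
  qed
  define g where "g k f = (if e \<le> \<bar>\<Sum>i\<in>{m..<k}. f i\<bar> \<and> (\<forall>j\<in>{m..<k}. \<bar>\<Sum>i\<in>{m..<j}. f i\<bar> < e)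
        then \<Sum>i\<in>{m..<k}. f i else (0::real))" for k f
  have gm: "g k \<in> borel_measurable (PiM {m..<k} (\<lambda>_. borel))" for k
  proof -
    have sm: "(\<lambda>f. \<Sum>i\<in>{m..<j}. f i) \<in> borel_measurable (PiM {m..<k} (\<lambda>_. borel::real measure))" if "j \<le> k" for j
      by (rule meas_sumPi) (use that in auto)
    have [measurable]: "Measurable.pred (PiM {m..<k} (\<lambda>_. borel::real measure)) (\<lambda>f. \<forall>j\<in>{m..<k}. \<bar>\<Sum>i\<in>{m..<j}. f i\<bar> < e)"
      by (rule pred_intros_finite(3)) (use sm in auto)
    note [measurable] = sm[of k, OF order_refl]
    show ?thesis unfolding g_def by measurable
  qed
  have key: "e^2 * prob (Ak k) \<le> expectation (\<lambda>x. indicator (Ak k) x * (T n x)^2)" if k: "k \<in> {m..n}" for k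
  proof -
    have Aks: "Ak k \<in> sets M" using Ak_sets k by auto
    have Gint: "integrable M (\<lambda>x. indicator (Ak k) x * T k x)"
      using Tint[of k] k Aks by (intro int_ind_mult) auto
    have Geq: "x \<in> space M \<Longrightarrow> indicator (Ak k) x * T k x = g k (restrict (\<lambda>i. Z i x) {m..<k})" for x
      unfolding g_def Ak_def T_def by (auto simp: indicator_def intro!: sum.cong)
    have s1: "{m..<k} \<subseteq> I" "{k..<n} \<subseteq> I" "{m..<k} \<inter> {k..<n} = {}" using sub k by auto
    note orth = kolm_orth[OF indep int2 mean s1 finite_atLeastLessThan gm Gint Geq]
    have a1: "e^2 * indicator (Ak k) x \<le> indicator (Ak k) x * (T k x)^2" for x
    proof (cases "x \<in> Ak k")
      case True
      then have "e \<le> \<bar>T k x\<bar>" by (auto simp: Ak_def)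
      then have "e^2 \<le> \<bar>T k x\<bar>^2" using e by (intro power_mono) auto
      then show ?thesis using True by simp
    qed simp
    have a2: "indicator (Ak k) x * (T k x)^2 + 2 * (indicator (Ak k) x * T k x * (\<Sum>j\<in>{k..<n}. Z j x))
         \<le> indicator (Ak k) x * (T n x)^2" for x
    proof -
      have "T n x = T k x + (\<Sum>j\<in>{k..<n}. Z j x)"
        unfolding T_def using k by (simp add: sum.atLeastLessThan_concat)
      then show ?thesis by (simp add: indicator_def power2_eq_square algebra_simps)
    qed
    have i1: "integrable M (\<lambda>x. indicator (Ak k) x * (T k x)^2)"
      using T2int[of k] k Aks by (intro int_ind_mult) auto
    have i2: "integrable M (\<lambda>x. indicator (Ak k) x * (T n x)^2)"
      using T2int[of n] k Aks by (intro int_ind_mult) auto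
    have ii: "integrable M (indicator (Ak k) :: 'a \<Rightarrow> real)"
      using Aks by (intro integrable_real_indicator) (auto simp: less_top[symmetric])
    have "e^2 * prob (Ak k) = expectation (\<lambda>x. e^2 * indicator (Ak k) x)"
      using Aks by simp
    also have "\<dots> \<le> expectation (\<lambda>x. indicator (Ak k) x * (T k x)^2)"
      using a1 i1 Aks ii by (intro integral_mono) auto
    also have "\<dots> = expectation (\<lambda>x. indicator (Ak k) x * (T k x)^2 + 2 * (indicator (Ak k) x * T k x * (\<Sum>j\<in>{k..<n}. Z j x)))"
      using i1 orth by simp
    also have "\<dots> \<le> expectation (\<lambda>x. indicator (Ak k) x * (T n x)^2)"
      using i1 orth i2 a2 by (intro integral_mono) auto
    finally show ?thesis .
  qed
  define E where "E = {x \<in> space M. \<exists>k\<in>{m..n}. e \<le> \<bar>\<Sum>i\<in>{m..<k}. Z i x\<bar>}"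
  have Es: "E \<in> sets M"
  proof -
    have [measurable]: "Measurable.pred M (\<lambda>x. \<exists>k\<in>{m..n}. e \<le> \<bar>T k x\<bar>)"
      by (rule pred_intros_finite(4)) auto
    show ?thesis unfolding E_def T_def[symmetric] by measurable
  qed
  have p1: "indicator E x \<le> (\<Sum>k\<in>{m..n}. indicator (Ak k) x :: real)" if x: "x \<in> space M" for x
  proof (cases "x \<in> E")
    case True
    then have "\<exists>k. k\<in>{m..n} \<and> e \<le> \<bar>T k x\<bar>" unfolding E_def T_def by auto
    then obtain k where k: "k\<in>{m..n} \<and> e \<le> \<bar>T k x\<bar>" and kl: "\<And>j. j < k \<Longrightarrow> \<not> (j\<in>{m..n} \<and> e \<le> \<bar>T j x\<bar>)"
      using exists_least_iff[of "\<lambda>k. k\<in>{m..n} \<and> e \<le> \<bar>T k x\<bar>"] by blast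
    have "x \<in> Ak k" unfolding Ak_def using x k kl by force
    then have "indicator (Ak k) x \<le> (\<Sum>k\<in>{m..n}. indicator (Ak k) x :: real)"
      using k by (intro member_le_sum) auto
    then show ?thesis using True \<open>x \<in> Ak k\<close> by simp
  qed (simp add: sum_nonneg)
  have p2: "(\<Sum>k\<in>{m..n}. indicator (Ak k) x :: real) \<le> 1" for x
  proof (cases "\<exists>k\<in>{m..n}. x \<in> Ak k")
    case True
    then obtain k where k: "k\<in>{m..n}" "x \<in> Ak k" by auto
    have other: "x \<notin> Ak j" if "j \<in> {m..n}" "j \<noteq> k" for j
    proof
      assume j: "x \<in> Ak j"
      show False
      proof (cases "j < k")
        case True then show False using j k that unfolding Ak_def by force
      next
        case False then have "k < j" using that by auto
        then show False using j k that unfolding Ak_def by force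
      qed
    qed
    have "(\<Sum>k\<in>{m..n}. indicator (Ak k) x :: real) = indicator (Ak k) x + (\<Sum>j\<in>{m..n}-{k}. indicator (Ak j) x)"
      using k by (subst sum.remove) auto
    also have "(\<Sum>j\<in>{m..n}-{k}. indicator (Ak j) x :: real) = 0"
      using other by (intro sum.neutral) auto
    finally show ?thesis using k by simp
  qed simp
  have "e^2 * prob E = expectation (\<lambda>x. e^2 * indicator E x)"
    using Es by simp
  also have "\<dots> \<le> expectation (\<lambda>x. e^2 * (\<Sum>k\<in>{m..n}. indicator (Ak k) x))"
    using Es Ak_sets p1 e by (intro integral_mono_AE) (auto intro!: AE_I2 mult_left_mono iind Bochner_Integration.integrable_sum)
  also have "\<dots> = (\<Sum>k\<in>{m..n}. e^2 * prob (Ak k))"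
  proof -
    have "expectation (\<lambda>x. e^2 * (\<Sum>k\<in>{m..n}. indicator (Ak k) x)) = expectation (\<lambda>x. \<Sum>k\<in>{m..n}. e^2 * indicator (Ak k) x)"
      by (simp only: sum_distrib_left)
    also have "\<dots> = (\<Sum>k\<in>{m..n}. expectation (\<lambda>x. e^2 * indicator (Ak k) x))"
      by (rule Bochner_Integration.integral_sum) (auto intro!: iind Ak_sets)
    also have "\<dots> = (\<Sum>k\<in>{m..n}. e^2 * prob (Ak k))"
      by (rule sum.cong) (auto simp: Ak_sets)
    finally show ?thesis .
  qed
  also have "\<dots> \<le> (\<Sum>k\<in>{m..n}. expectation (\<lambda>x. indicator (Ak k) x * (T n x)^2))"
    by (intro sum_mono key)
  also have "\<dots> = expectation (\<lambda>x. (\<Sum>k\<in>{m..n}. indicator (Ak k) x) * (T n x)^2)"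
    using Ak_sets T2int[of n]
    by (subst Bochner_Integration.integral_sum[symmetric]) (auto intro!: int_ind_mult simp: sum_distrib_right)
  also have "\<dots> \<le> expectation (\<lambda>x. (T n x)^2)"
  proof (intro integral_mono)
    show "integrable M (\<lambda>x. (\<Sum>k\<in>{m..n}. indicator (Ak k) x) * (T n x)^2)"
    proof -
      have "(\<lambda>x. (\<Sum>k\<in>{m..n}. indicator (Ak k) x) * (T n x)^2) = (\<lambda>x. \<Sum>k\<in>{m..n}. indicator (Ak k) x * (T n x)^2)"
        by (simp only: sum_distrib_right)
      moreover have "integrable M (\<lambda>x. \<Sum>k\<in>{m..n}. indicator (Ak k) x * (T n x)^2)"
        using Ak_sets T2int[of n] by (intro Bochner_Integration.integrable_sum int_ind_mult) auto
      ultimately show ?thesis by simp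
    qed
    show "(\<Sum>k\<in>{m..n}. indicator (Ak k) x) * (T n x)^2 \<le> (T n x)^2" for x
      using p2[of x] by (intro mult_left_le_one_le) (auto intro: sum_nonneg)
  qed (use T2int in auto)
  also have "\<dots> = (\<Sum>i\<in>{m..<n}. expectation (\<lambda>x. (Z i x)^2))"
    using ET2 by simp
  finally have "e^2 * prob E \<le> (\<Sum>i\<in>{m..<n}. expectation (\<lambda>x. (Z i x)^2))" .
  then show ?thesis unfolding E_def[symmetric] using e by (simp add: field_simps)
qed

lemma bex_Suc_ivl: "(\<exists>k\<in>{Suc m..Suc n}. P k) \<longleftrightarrow> (\<exists>k\<in>{m..n}. P (Suc k))"
proof
  assume "\<exists>k\<in>{Suc m..Suc n}. P k"
  then obtain k where k: "k \<in> {Suc m..Suc n}" "P k" by blast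
  then have "Suc (k - 1) = k" by auto
  then show "\<exists>k\<in>{m..n}. P (Suc k)" using k by (intro bexI[of _ "k - 1"]) auto
next
  assume "\<exists>k\<in>{m..n}. P (Suc k)"
  then obtain k where k: "k \<in> {m..n}" "P (Suc k)" by blast
  then show "\<exists>k\<in>{Suc m..Suc n}. P k" by (intro bexI[of _ "Suc k"]) auto
qed

lemma Suc_ivl_sub: assumes "\<And>i. Suc i \<in> I" shows "{Suc m..<Suc n} \<subseteq> I"
proof
  fix x assume "x \<in> {Suc m..<Suc n}"
  then have "x = Suc (x - 1)" by auto
  then show "x \<in> I" using assms by metis
qed

lemma (in prob_space) kolmogorov_as:
  fixes Z :: "nat \<Rightarrow> 'a \<Rightarrow> real"
  assumes indep: "indep_vars (\<lambda>_. borel) Z I"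
    and int2: "\<And>i. i \<in> I \<Longrightarrow> integrable M (\<lambda>x. (Z i x)^2)"
    and mean: "\<And>i. i \<in> I \<Longrightarrow> expectation (Z i) = 0"
    and sub: "\<And>i. Suc i \<in> I"
    and summ: "summable (\<lambda>i. expectation (\<lambda>x. (Z (Suc i) x)^2))"
  shows "AE x in M. summable (\<lambda>s. Z (Suc s) x)"
proof -
  have rv[measurable]: "Z (Suc i) \<in> borel_measurable M" for i
    using indep sub unfolding indep_vars_def by auto
  define v where "v i = expectation (\<lambda>x. (Z (Suc i) x)^2)" for i
  have v_nonneg: "0 \<le> v i" for i unfolding v_def by simp
  have F_bound: "prob {x \<in> space M. \<exists>k\<in>{m..n}. e \<le> \<bar>\<Sum>i\<in>{m..<k}. Z (Suc i) x\<bar>} \<le> (\<Sum>i\<in>{m..<n}. v i) / e^2"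
    if e: "e > 0" for m n e
  proof -
    have "prob {x \<in> space M. \<exists>k\<in>{Suc m..Suc n}. e \<le> \<bar>\<Sum>i\<in>{Suc m..<k}. Z i x\<bar>}
      \<le> (\<Sum>i\<in>{Suc m..<Suc n}. expectation (\<lambda>x. (Z i x)^2)) / e^2"
      by (rule kolmogorov_ineq[OF indep int2 mean Suc_ivl_sub[OF sub] e])
    moreover have "{x \<in> space M. \<exists>k\<in>{Suc m..Suc n}. e \<le> \<bar>\<Sum>i\<in>{Suc m..<k}. Z i x\<bar>}
       = {x \<in> space M. \<exists>k\<in>{m..n}. e \<le> \<bar>\<Sum>i\<in>{m..<k}. Z (Suc i) x\<bar>}"
      by (simp only: bex_Suc_ivl sum.shift_bounds_Suc_ivl)
    moreover have "(\<Sum>i\<in>{Suc m..<Suc n}. expectation (\<lambda>x. (Z i x)^2)) = (\<Sum>i\<in>{m..<n}. v i)"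
      by (simp only: sum.shift_bounds_Suc_ivl v_def)
    ultimately show ?thesis by simp
  qed
  have E_bound: "prob {x \<in> space M. \<exists>k\<ge>m. e \<le> \<bar>\<Sum>i\<in>{m..<k}. Z (Suc i) x\<bar>} \<le> d / e^2"
    if e: "e > 0" and d: "\<And>n. (\<Sum>i\<in>{m..<n}. v i) \<le> d" for m e d
  proof -
    define F where "F n = {x \<in> space M. \<exists>k\<in>{m..n}. e \<le> \<bar>\<Sum>i\<in>{m..<k}. Z (Suc i) x\<bar>}" for n
    have Fs: "range F \<subseteq> sets M"
    proof safe
      fix n show "F n \<in> sets M" unfolding F_def by measurable
    qed
    have Finc: "incseq F"
    proof (rule incseq_SucI)
      fix n show "F n \<subseteq> F (Suc n)" unfolding F_def by auto
    qed
    have U: "(\<Union>n. F n) = {x \<in> space M. \<exists>k\<ge>m. e \<le> \<bar>\<Sum>i\<in>{m..<k}. Z (Suc i) x\<bar>}"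
    proof
      show "(\<Union>n. F n) \<subseteq> {x \<in> space M. \<exists>k\<ge>m. e \<le> \<bar>\<Sum>i\<in>{m..<k}. Z (Suc i) x\<bar>}"
        unfolding F_def by auto
      show "{x \<in> space M. \<exists>k\<ge>m. e \<le> \<bar>\<Sum>i\<in>{m..<k}. Z (Suc i) x\<bar>} \<subseteq> (\<Union>n. F n)"
      proof
        fix x assume "x \<in> {x \<in> space M. \<exists>k\<ge>m. e \<le> \<bar>\<Sum>i\<in>{m..<k}. Z (Suc i) x\<bar>}"
        then obtain k where "x \<in> space M" "k \<ge> m" "e \<le> \<bar>\<Sum>i\<in>{m..<k}. Z (Suc i) x\<bar>" by auto
        then have "x \<in> F k" unfolding F_def by auto
        then show "x \<in> (\<Union>n. F n)" by auto
      qed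
    qed
    have "(\<lambda>n. prob (F n)) \<longlonglongrightarrow> prob (\<Union>n. F n)"
      by (rule finite_Lim_measure_incseq[OF Fs Finc])
    moreover have "\<forall>n\<ge>0. prob (F n) \<le> d / e^2"
    proof (intro allI impI)
      fix n :: nat
      have "prob (F n) \<le> (\<Sum>i\<in>{m..<n}. v i) / e^2" unfolding F_def by (rule F_bound[OF e])
      also have "\<dots> \<le> d / e^2" using d[of n] by (intro divide_right_mono) auto
      finally show "prob (F n) \<le> d / e^2" .
    qed
    ultimately have "prob (\<Union>n. F n) \<le> d / e^2" by (intro LIMSEQ_le_const2) auto
    then show ?thesis unfolding U .
  qed
  have null: "{x \<in> space M. \<forall>m. \<exists>k\<ge>m. e \<le> \<bar>\<Sum>i\<in>{m..<k}. Z (Suc i) x\<bar>} \<in> null_sets M"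
    if e: "e > 0" for e
  proof -
    define N where "N = {x \<in> space M. \<forall>m. \<exists>k\<ge>m. e \<le> \<bar>\<Sum>i\<in>{m..<k}. Z (Suc i) x\<bar>}"
    have Ns: "N \<in> sets M" unfolding N_def by measurable
    have "prob N \<le> d" if d: "d > 0" for d
    proof -
      have "summable v" using summ unfolding v_def by simp
      have de: "d * e^2 > 0" using d e by simp
      obtain m where m: "\<And>n. norm (\<Sum>i\<in>{m..<n}. v i) < d * e^2"
        using \<open>summable v\<close> de unfolding summable_Cauchy by blast
      have "(\<Sum>i\<in>{m..<n}. v i) \<le> d * e^2" for n using m[of n] by simp
      then have b: "prob {x \<in> space M. \<exists>k\<ge>m. e \<le> \<bar>\<Sum>i\<in>{m..<k}. Z (Suc i) x\<bar>} \<le> (d * e^2) / e^2"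
        by (intro E_bound e)
      have "N \<subseteq> {x \<in> space M. \<exists>k\<ge>m. e \<le> \<bar>\<Sum>i\<in>{m..<k}. Z (Suc i) x\<bar>}"
        unfolding N_def by auto
      moreover have "{x \<in> space M. \<exists>k\<ge>m. e \<le> \<bar>\<Sum>i\<in>{m..<k}. Z (Suc i) x\<bar>} \<in> sets M" by measurable
      ultimately have "prob N \<le> prob {x \<in> space M. \<exists>k\<ge>m. e \<le> \<bar>\<Sum>i\<in>{m..<k}. Z (Suc i) x\<bar>}"
        by (intro finite_measure_mono)
      also have "\<dots> \<le> (d * e^2) / e^2" by (rule b)
      also have "\<dots> = d" using e by simp
      finally show ?thesis .
    qed
    then have "prob N \<le> 0" by (meson dense not_le)
    then have "prob N = 0" using measure_nonneg[of M N] by linarith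
    then show ?thesis unfolding N_def[symmetric] using Ns by (auto simp: emeasure_eq_measure)
  qed
  have "AE x in M. \<exists>m. \<forall>k\<ge>m. \<bar>\<Sum>i\<in>{m..<k}. Z (Suc i) x\<bar> < 1 / (Suc j)" for j :: nat
  proof (rule AE_I'[OF null[of "1 / Suc j"]])
    show "{x \<in> space M. \<not> (\<exists>m. \<forall>k\<ge>m. \<bar>\<Sum>i\<in>{m..<k}. Z (Suc i) x\<bar> < 1 / (Suc j))}
      \<subseteq> {x \<in> space M. \<forall>m. \<exists>k\<ge>m. 1 / (Suc j) \<le> \<bar>\<Sum>i\<in>{m..<k}. Z (Suc i) x\<bar>}"
      by (auto simp: not_less)
  qed simp
  then have "AE x in M. \<forall>j::nat. \<exists>m. \<forall>k\<ge>m. \<bar>\<Sum>i\<in>{m..<k}. Z (Suc i) x\<bar> < 1 / (Suc j)"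
    by (simp add: AE_all_countable)
  then show ?thesis
  proof (rule AE_mp[OF _ AE_I2], intro impI)
    fix x assume H: "\<forall>j::nat. \<exists>m. \<forall>k\<ge>m. \<bar>\<Sum>i\<in>{m..<k}. Z (Suc i) x\<bar> < 1 / (Suc j)"
    show "summable (\<lambda>s. Z (Suc s) x)"
      unfolding summable_Cauchy
    proof (intro allI impI)
      fix r :: real assume r: "r > 0"
      obtain j :: nat where j0: "2 / r < real j"
        using reals_Archimedean2 by blast
      have j: "2 / r < Suc j" using j0 by simp
      have j': "2 / (Suc j) < r" using j r by (simp add: field_simps)
      obtain m where m: "\<And>k. k \<ge> m \<Longrightarrow> \<bar>\<Sum>i\<in>{m..<k}. Z (Suc i) x\<bar> < 1 / (Suc j)"
        using H by blast
      show "\<exists>N. \<forall>m'\<ge>N. \<forall>n. norm (\<Sum>i\<in>{m'..<n}. Z (Suc i) x) < r"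
      proof (intro exI allI impI)
        fix m' n assume mm: "m \<le> m'"
        show "norm (\<Sum>i\<in>{m'..<n}. Z (Suc i) x) < r"
        proof (cases "m' \<le> n")
          case True
          have "(\<Sum>i\<in>{m..<n}. Z (Suc i) x) = (\<Sum>i\<in>{m..<m'}. Z (Suc i) x) + (\<Sum>i\<in>{m'..<n}. Z (Suc i) x)"
            using mm True by (simp add: sum.atLeastLessThan_concat)
          then have "\<bar>\<Sum>i\<in>{m'..<n}. Z (Suc i) x\<bar> \<le> \<bar>\<Sum>i\<in>{m..<n}. Z (Suc i) x\<bar> + \<bar>\<Sum>i\<in>{m..<m'}. Z (Suc i) x\<bar>"
            by linarith
          also have "\<dots> < 2 / (Suc j)" using m[of n] m[of m'] mm True by simp
          finally show ?thesis using j' by simp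
        next
          case False then show ?thesis using r by simp
        qed
      qed
    qed
  qed
qed

lemma (in prob_space) char_distr_eq_int:
  assumes [measurable]: "f \<in> borel_measurable M"
  shows "char (distr M borel f) t = (CLINT x|M. iexp (t * f x))"
  unfolding char_def by (simp add: integral_distr)

lemma (in prob_space) char_scale:
  assumes [measurable]: "f \<in> borel_measurable M"
  shows "char (distr M borel (\<lambda>x. a * f x)) t = char (distr M borel f) (t * a)"
proof -
  have m2: "(\<lambda>x. a * f x) \<in> borel_measurable M" by measurable
  show ?thesis by (simp only: char_distr_eq_int[OF m2] char_distr_eq_int[OF assms] mult.assoc)
qed

lemma (in prob_space) char_wsum:
  fixes Y :: "nat \<Rightarrow> 'a \<Rightarrow> real"
  assumes indep: "indep_vars (\<lambda>_. borel) Y I" and S: "S \<subseteq> I"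
    and ident: "\<And>s. s \<in> S \<Longrightarrow> distr M borel (Y s) = \<mu>"
  shows "char (distr M borel (\<lambda>x. \<Sum>s\<in>S. a s * Y s x)) t = (\<Prod>s\<in>S. char \<mu> (t * a s))"
proof -
  have rv: "Y s \<in> borel_measurable M" if "s \<in> I" for s
    using indep that unfolding indep_vars_def by auto
  have ind2: "indep_vars (\<lambda>_. borel) (\<lambda>s x. a s * Y s x) S"
    by (rule indep_vars_compose2[where X=Y, OF indep_vars_subset[OF indep S]]) auto
  have "char (distr M borel (\<lambda>x. \<Sum>s\<in>S. a s * Y s x)) t = (\<Prod>s\<in>S. char (distr M borel (\<lambda>x. a s * Y s x)) t)"
    by (rule char_distr_sum[OF ind2])
  also have "\<dots> = (\<Prod>s\<in>S. char \<mu> (t * a s))"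
  proof (rule prod.cong)
    fix s assume s: "s \<in> S"
    then have [measurable]: "Y s \<in> borel_measurable M" using rv S by auto
    show "char (distr M borel (\<lambda>x. a s * Y s x)) t = char \<mu> (t * a s)"
      using ident[OF s] by (simp add: char_scale)
  qed simp
  finally show ?thesis .
qed

lemma char_convolution:
  assumes A: "real_distribution A" and B: "real_distribution B"
  shows "char (A \<star> B) t = char A t * char B t"
proof -
  interpret A: real_distribution A by (rule A)
  interpret B: real_distribution B by (rule B)
  interpret P: pair_prob_space A B ..
  have [measurable]: "(\<lambda>(x, y). x + y) \<in> borel_measurable (A \<Otimes>\<^sub>M B)"
    by measurable
  have int: "integrable (A \<Otimes>\<^sub>M B) (\<lambda>(x,y). iexp (t * x) * iexp (t * y))"
    by (rule P.integrable_const_bound[where B=1]) (auto simp: norm_mult simp del: of_real_mult)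
  have "char (A \<star> B) t = (CLINT z|A \<Otimes>\<^sub>M B. iexp (t * ((\<lambda>(x, y). x + y) z)))"
    unfolding convolution_def char_def by (simp add: integral_distr)
  also have "\<dots> = (CLINT z|A \<Otimes>\<^sub>M B. (\<lambda>(x,y). iexp (t * x) * iexp (t * y)) z)"
    by (rule Bochner_Integration.integral_cong) (auto simp: distrib_left exp_add)
  also have "\<dots> = (CLINT x|A. (CLINT y|B. iexp (t * x) * iexp (t * y)))"
    using P.integral_fst'[OF int] by simp
  also have "\<dots> = (CLINT x|A. iexp (t * x) * char B t)"
    unfolding char_def by simp
  also have "\<dots> = char A t * char B t"
    unfolding char_def by simp
  finally show ?thesis .
qed

lemma real_distribution_convolution:
  assumes A: "real_distribution A" and B: "real_distribution B"
  shows "real_distribution (A \<star> B)"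
proof -
  interpret A: real_distribution A by (rule A)
  interpret B: real_distribution B by (rule B)
  interpret P: pair_prob_space A B ..
  have "prob_space (A \<star> B)"
    unfolding convolution_def by (rule P.prob_space_distr) measurable
  then show ?thesis unfolding real_distribution_def real_distribution_axioms_def by simp
qed

lemma char_scaled_normal:
  "char (distr std_normal_distribution borel (\<lambda>z. \<rho> * z)) t = complex_of_real (exp (- ((\<rho> * t)^2) / 2))"
proof -
  interpret N: real_distribution std_normal_distribution by (rule real_dist_normal_dist)
  have "char (distr std_normal_distribution borel (\<lambda>z. \<rho> * z)) t = (CLINT x|std_normal_distribution. iexp (t * (\<rho> * x)))"
    by (rule N.char_distr_eq_int) simp
  also have "\<dots> = char std_normal_distribution (t * \<rho>)"
    by (simp add: char_def mult.assoc)
  also have "\<dots> = complex_of_real (exp (- ((\<rho> * t)^2) / 2))"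
    by (simp add: char_std_normal_distribution mult.commute)
  finally show ?thesis .
qed

lemma real_distribution_scaled_normal:
  "real_distribution (distr std_normal_distribution borel (\<lambda>z. \<rho> * z))"
proof -
  interpret N: real_distribution std_normal_distribution by (rule real_dist_normal_dist)
  show ?thesis by (rule N.real_distribution_distr) simp
qed

lemma exp_minus_bound:
  fixes a :: real assumes a: "0 \<le> a"
  shows "\<bar>exp (- a) - (1 - a)\<bar> \<le> a^2 / 2"
proof (cases "a = 0")
  case True then show ?thesis by simp
next
  case False
  then have h: "- a < 0" using a by simp
  obtain t where t: "- a < t" "t < 0"
    and eq: "exp (- a) = (\<Sum>m<2. exp 0 / fact m * (- a) ^ m) + exp t / fact 2 * (- a) ^ 2"
    using Maclaurin_minus[OF h, of 2 "\<lambda>_. exp" exp] by (auto intro: DERIV_exp)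
  have eq2: "exp (- a) - (1 - a) = exp t / 2 * a^2"
    using eq by (simp add: eval_nat_numeral)
  have "exp t \<le> 1" using t by simp
  then have "exp t / 2 * a^2 \<le> a^2 / 2" by (simp add: divide_right_mono mult_left_le_one_le)
  moreover have "0 \<le> exp t / 2 * a^2" by simp
  ultimately show ?thesis unfolding eq2 by simp
qed

context prob_space
begin

definition gfun :: "('a \<Rightarrow> real) \<Rightarrow> real \<Rightarrow> real" where
  "gfun X d = expectation (\<lambda>x. min (6 * (X x)^2) (d * \<bar>X x\<bar>^3))"

lemma gfun_integrable:
  fixes X :: "'a \<Rightarrow> real"
  assumes [measurable]: "X \<in> borel_measurable M" and i2: "integrable M (\<lambda>x. (X x)^2)" and d: "0 \<le> d"
  shows "integrable M (\<lambda>x. min (6 * (X x)^2) (d * \<bar>X x\<bar>^3))"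
proof (rule Bochner_Integration.integrable_bound[where f="\<lambda>x. 6 * (X x)^2"])
  show "integrable M (\<lambda>x. 6 * (X x)^2)" using i2 by simp
  show "AE x in M. norm (min (6 * (X x)^2) (d * \<bar>X x\<bar>^3)) \<le> norm (6 * (X x)^2)"
    using d by (intro AE_I2) (auto simp: abs_le_iff min_def)
qed measurable

lemma gfun_nonneg:
  assumes d: "0 \<le> d" shows "0 \<le> gfun X d"
  unfolding gfun_def using d by (intro integral_nonneg_AE AE_I2) auto

lemma gfun_mono:
  fixes X :: "'a \<Rightarrow> real"
  assumes [measurable]: "X \<in> borel_measurable M" and i2: "integrable M (\<lambda>x. (X x)^2)"
    and d: "0 \<le> d1" "d1 \<le> d2"
  shows "gfun X d1 \<le> gfun X d2"
  unfolding gfun_def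
proof (rule integral_mono)
  show "integrable M (\<lambda>x. min (6 * (X x)^2) (d1 * \<bar>X x\<bar>^3))" using gfun_integrable[OF _ i2] d by simp
  show "integrable M (\<lambda>x. min (6 * (X x)^2) (d2 * \<bar>X x\<bar>^3))" using gfun_integrable[OF _ i2] d by simp
  fix x show "min (6 * (X x)^2) (d1 * \<bar>X x\<bar>^3) \<le> min (6 * (X x)^2) (d2 * \<bar>X x\<bar>^3)"
    using d by (intro min.mono order_refl mult_right_mono) auto
qed

lemma gfun_lim:
  fixes X :: "'a \<Rightarrow> real"
  assumes [measurable]: "X \<in> borel_measurable M" and i2: "integrable M (\<lambda>x. (X x)^2)"
    and d: "d \<longlonglongrightarrow> 0" "\<And>n. 0 \<le> d n"
  shows "(\<lambda>n. gfun X (d n)) \<longlonglongrightarrow> 0"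
proof -
  have "(\<lambda>n. expectation (\<lambda>x. min (6 * (X x)^2) (d n * \<bar>X x\<bar>^3))) \<longlonglongrightarrow> expectation (\<lambda>x. 0)"
  proof (rule integral_dominated_convergence[where w="\<lambda>x. 6 * (X x)^2"])
    show "integrable M (\<lambda>x. 6 * (X x)^2)" using i2 by simp
    show "AE x in M. (\<lambda>n. min (6 * (X x)^2) (d n * \<bar>X x\<bar>^3)) \<longlonglongrightarrow> 0"
    proof (intro AE_I2)
      fix x
      have "(\<lambda>n. min (6 * (X x)^2) (d n * \<bar>X x\<bar>^3)) \<longlonglongrightarrow> min (6 * (X x)^2) (0 * \<bar>X x\<bar>^3)"
        by (intro tendsto_intros d)
      moreover have "min (6 * (X x)^2) (0 * \<bar>X x\<bar>^3) = (0::real)" by (auto simp: min_def)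
      ultimately show "(\<lambda>n. min (6 * (X x)^2) (d n * \<bar>X x\<bar>^3)) \<longlonglongrightarrow> 0" by simp
    qed
    show "AE x in M. norm (min (6 * (X x)^2) (d n * \<bar>X x\<bar>^3)) \<le> 6 * (X x)^2" for n
      using d(2)[of n] by (intro AE_I2) (auto simp: abs_le_iff min_def)
  qed measurable
  then show ?thesis unfolding gfun_def by simp
qed

lemma term_bound:
  fixes X :: "'a \<Rightarrow> real"
  assumes [measurable]: "X \<in> borel_measurable M"
    and i1: "integrable M X" and i2: "integrable M (\<lambda>x. (X x)^2)"
    and m0: "expectation X = 0" and v1: "variance X = 1"
  shows "cmod (char (distr M borel X) u - complex_of_real (exp (- (u^2) / 2)))
     \<le> u^2 / 6 * gfun X \<bar>u\<bar> + u^4 / 8"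
proof -
  have A: "cmod (char (distr M borel X) u - (1 - u^2 * 1 / 2)) \<le> (u^2 / 6) * expectation (\<lambda>x. min (6 * (X x)^2) (\<bar>u\<bar> * \<bar>X x\<bar>^3))"
    by (rule char_approx3') (use i1 i2 m0 v1 in auto)
  have B: "\<bar>exp (- (u^2 / 2)) - (1 - u^2 / 2)\<bar> \<le> (u^2/2)^2 / 2"
    by (rule exp_minus_bound) simp
  have C: "cmod (complex_of_real (1 - u^2 / 2) - complex_of_real (exp (- (u^2) / 2))) \<le> u^4 / 8"
  proof -
    have "cmod (complex_of_real (1 - u^2 / 2) - complex_of_real (exp (- (u^2) / 2))) = \<bar>exp (- (u^2 / 2)) - (1 - u^2 / 2)\<bar>"
      by (simp del: of_real_diff add: of_real_diff[symmetric] abs_minus_commute)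
    also have "\<dots> \<le> u^4/8" using B by (simp add: power2_eq_square field_simps eval_nat_numeral)
    finally show ?thesis .
  qed
  have "cmod (char (distr M borel X) u - complex_of_real (exp (- (u^2) / 2)))
     \<le> cmod (char (distr M borel X) u - complex_of_real (1 - u^2 / 2)) + cmod (complex_of_real (1 - u^2 / 2) - complex_of_real (exp (- (u^2) / 2)))"
    using norm_triangle_ineq[of "char (distr M borel X) u - complex_of_real (1 - u^2 / 2)" "complex_of_real (1 - u^2 / 2) - complex_of_real (exp (- (u^2) / 2))"]
    by simp
  also have "\<dots> \<le> u^2 / 6 * gfun X \<bar>u\<bar> + u^4 / 8"
    using A C unfolding gfun_def by (intro add_mono) auto
  finally show ?thesis .
qed

lemma tail_bound:
  fixes b :: "nat \<Rightarrow> real" and X :: "'a \<Rightarrow> real"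
  assumes [measurable]: "X \<in> borel_measurable M"
    and i1: "integrable M X" and i2: "integrable M (\<lambda>x. (X x)^2)"
    and m0: "expectation X = 0" and v1: "variance X = 1"
    and S: "finite S" and bq: "\<And>s. s \<in> S \<Longrightarrow> (b s)^2 \<le> q" and q: "0 \<le> q"
    and bL: "(\<Sum>s\<in>S. (b s)^2) \<le> L"
  shows "cmod ((\<Prod>s\<in>S. char (distr M borel X) (t * b s)) - complex_of_real (exp (- (t^2) * (\<Sum>s\<in>S. (b s)^2) / 2)))
     \<le> L * (t^2 / 6 * gfun X (\<bar>t\<bar> * sqrt q) + t^4 * q / 8)"
proof -
  interpret D: real_distribution "distr M borel X" by simp
  define C where "C = t^2 / 6 * gfun X (\<bar>t\<bar> * sqrt q) + t^4 * q / 8"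
  have C0: "0 \<le> C" unfolding C_def using gfun_nonneg[of "\<bar>t\<bar> * sqrt q" X] q by simp
  have ex: "complex_of_real (exp (- (t^2) * (\<Sum>s\<in>S. (b s)^2) / 2)) = (\<Prod>s\<in>S. complex_of_real (exp (- ((t * b s)^2) / 2)))"
  proof -
    have "- (t^2) * (\<Sum>s\<in>S. (b s)^2) / 2 = (\<Sum>s\<in>S. - ((t * b s)^2) / 2)"
      by (simp add: sum_distrib_left sum_divide_distrib power_mult_distrib)
    then show ?thesis using S by (simp add: exp_sum)
  qed
  have "cmod ((\<Prod>s\<in>S. char (distr M borel X) (t * b s)) - (\<Prod>s\<in>S. complex_of_real (exp (- ((t * b s)^2) / 2))))
      \<le> (\<Sum>s\<in>S. cmod (char (distr M borel X) (t * b s) - complex_of_real (exp (- ((t * b s)^2) / 2))))"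
    by (rule norm_prod_diff) (auto simp: D.cmod_char_le_1)
  also have "\<dots> \<le> (\<Sum>s\<in>S. (b s)^2 * C)"
  proof (rule sum_mono)
    fix s assume s: "s \<in> S"
    have bs: "\<bar>b s\<bar> \<le> sqrt q" using bq[OF s] by (simp add: real_le_rsqrt)
    have tb: "\<bar>t * b s\<bar> \<le> \<bar>t\<bar> * sqrt q" using bs by (simp add: abs_mult mult_left_mono)
    have g: "gfun X \<bar>t * b s\<bar> \<le> gfun X (\<bar>t\<bar> * sqrt q)"
      by (rule gfun_mono[OF _ i2]) (use tb in auto)
    have b4: "(b s)^4 \<le> (b s)^2 * q"
    proof -
      have "(b s)^4 = (b s)^2 * (b s)^2" by (simp add: eval_nat_numeral)
      also have "\<dots> \<le> (b s)^2 * q" using bq[OF s] by (intro mult_left_mono) auto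
      finally show ?thesis .
    qed
    have "cmod (char (distr M borel X) (t * b s) - complex_of_real (exp (- ((t * b s)^2) / 2)))
       \<le> (t * b s)^2 / 6 * gfun X \<bar>t * b s\<bar> + (t * b s)^4 / 8"
      by (rule term_bound[OF _ i1 i2 m0 v1]) simp
    also have "\<dots> \<le> (b s)^2 * C"
    proof -
      have m1: "t^2*(b s)^2 * gfun X \<bar>t * b s\<bar> \<le> t^2*(b s)^2 * gfun X (\<bar>t\<bar>* sqrt q)"
        by (rule mult_left_mono[OF g]) simp
      have m2: "t^4 * (b s)^4 \<le> t^4 * ((b s)^2*q)" by (rule mult_left_mono[OF b4]) simp
      have e1: "(t * b s)^2 / 6 * gfun X \<bar>t * b s\<bar> = (t^2*(b s)^2 * gfun X \<bar>t * b s\<bar>)/6"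
        by (simp add: power_mult_distrib)
      have e2: "(t * b s)^4 / 8 = t^4 * (b s)^4 / 8" by (simp add: power_mult_distrib)
      have e3: "(b s)^2 * C = (t^2*(b s)^2 * gfun X (\<bar>t\<bar>* sqrt q))/6 + t^4 * ((b s)^2*q)/8"
        unfolding C_def by (simp add: algebra_simps)
      show ?thesis unfolding e1 e2 e3 using m1 m2 by linarith
    qed
    finally show "cmod (char (distr M borel X) (t * b s) - complex_of_real (exp (- ((t * b s)^2) / 2))) \<le> (b s)^2 * C" .
  qed
  also have "\<dots> = (\<Sum>s\<in>S. (b s)^2) * C" by (simp add: sum_distrib_right)
  also have "\<dots> \<le> L * C" using bL C0 by (intro mult_right_mono) auto
  finally show ?thesis unfolding ex C_def .
qed

end

lemma sum_Suc_reindex: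
  fixes f :: "nat \<Rightarrow> 'a::comm_monoid_add"
  shows "(\<Sum>i<n. f (Suc i)) = (\<Sum>s\<in>{1..n}. f s)"
  by (induction n) (auto simp: atLeastAtMostSuc_conv add.commute)

lemma four_bound:
  fixes H G Tl E Hl C :: complex
  assumes "cmod H \<le> 1" "cmod G \<le> 1" "cmod (Tl - E) < a" "cmod (E - G) < a" "cmod (H - Hl) < a" "cmod (Hl - C) < a"
  shows "cmod (H * Tl - C * G) < 4 * a"
proof -
  have id: "H * Tl - C * G = H * (Tl - E) + H * (E - G) + (H - Hl) * G + (Hl - C) * G"
    by (simp add: algebra_simps)
  have "cmod (H * Tl - C * G) \<le> cmod (H * (Tl - E)) + cmod (H * (E - G)) + cmod ((H - Hl) * G) + cmod ((Hl - C) * G)"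
    unfolding id by (intro order_trans[OF norm_triangle_ineq] add_mono order_refl)
  also have "\<dots> = cmod H * cmod (Tl - E) + cmod H * cmod (E - G) + cmod (H - Hl) * cmod G + cmod (Hl - C) * cmod G"
    by (simp add: norm_mult)
  also have "\<dots> \<le> cmod (Tl - E) + cmod (E - G) + cmod (H - Hl) + cmod (Hl - C)"
    using assms by (intro add_mono mult_left_le_one_le mult_right_le_one_le) auto
  also have "\<dots> < 4 * a" using assms by linarith
  finally show ?thesis .
qed

lemma prod_cmod_le1:
  fixes z :: "nat \<Rightarrow> complex"
  assumes "\<And>i. cmod (z i) \<le> 1"
  shows "cmod (\<Prod>i\<in>A. z i) \<le> 1"
proof -
  have "cmod (\<Prod>i\<in>A. z i) = (\<Prod>i\<in>A. cmod (z i))" by (simp add: prod_norm)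
  also have "\<dots> \<le> 1" using assms by (intro prod_le_1) auto
  finally show ?thesis .
qed

theorem lemma3p15:
  fixes M :: "'a measure"
    and r :: "nat \<Rightarrow> nat"
    and c :: "nat \<Rightarrow> nat \<Rightarrow> real"   (* c s n = c_{s,n} *)
    and cl :: "nat \<Rightarrow> real"          (* cl s = c_s *)
    and L \<rho> :: real
    and Y :: "nat \<Rightarrow> 'a \<Rightarrow> real"
  assumes r_lim: "filterlim r at_top sequentially"
    and mono_abs: "\<And>n s. 1 \<le> s \<Longrightarrow> s < r n \<Longrightarrow> \<bar>c (Suc s) n\<bar> \<le> \<bar>c s n\<bar>"
    and L_pos: "L > 0"
    and sum_bound: "\<And>n. (\<Sum>s=1..r n. (c s n)\<^sup>2) \<le> L"
    and c_lim: "\<And>s. 1 \<le> s \<Longrightarrow> (\<lambda>n. c s n) \<longlonglongrightarrow> cl s"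
    and rho_nonneg: "\<rho> \<ge> 0"
    and tail_limsup: "(\<lambda>K. limsup (\<lambda>n. ereal (\<Sum>s=K+1..r n. (c s n)\<^sup>2))) \<longlonglongrightarrow> ereal (\<rho>\<^sup>2)"
    and tail_liminf: "(\<lambda>K. liminf (\<lambda>n. ereal (\<Sum>s=K+1..r n. (c s n)\<^sup>2))) \<longlonglongrightarrow> ereal (\<rho>\<^sup>2)"
    and P: "prob_space M"
    and Y_meas: "\<And>s. 1 \<le> s \<Longrightarrow> Y s \<in> borel_measurable M"
    and Y_indep: "prob_space.indep_vars M (\<lambda>_. borel) Y {1..}"
    and Y_ident: "\<And>s. 1 \<le> s \<Longrightarrow> distr M borel (Y s) = distr M borel (Y 1)"
    and Y_int: "integrable M (Y 1)"
    and Y_sq_int: "integrable M (\<lambda>x. (Y 1 x)\<^sup>2)"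
    and Y_mean: "(\<integral>x. Y 1 x \<partial>M) = 0"
    and Y_var: "(\<integral>x. (Y 1 x - (\<integral>y. Y 1 y \<partial>M))\<^sup>2 \<partial>M) = 1"
  shows "(AE x in M. summable (\<lambda>s. cl (Suc s) * Y (Suc s) x))
    \<and> (\<lambda>x. \<Sum>s. cl (Suc s) * Y (Suc s) x) \<in> borel_measurable M
    \<and> weak_conv_m (\<lambda>n. distr M borel (\<lambda>x. \<Sum>s=1..r n. c s n * Y s x))
        (distr M borel (\<lambda>x. \<Sum>s. cl (Suc s) * Y (Suc s) x)
          \<star> distr (density lborel std_normal_density) borel (\<lambda>z. \<rho> * z))"
proof -
  interpret prob_space M by (rule P)
  have YSm[measurable]: "Y (Suc s) \<in> borel_measurable M" for s using Y_meas by simp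
  have Y1m[measurable]: "Y 1 \<in> borel_measurable M" using Y_meas by simp
  define \<mu> where "\<mu> = distr M borel (Y 1)"
  interpret \<mu>: real_distribution \<mu> unfolding \<mu>_def by simp
  define \<phi> where "\<phi> = char \<mu>"
  have Yid: "distr M borel (Y s) = \<mu>" if "1 \<le> s" for s using Y_ident[OF that] unfolding \<mu>_def .
  have tr_int: "integrable M (\<lambda>x. f (Y s x)) \<longleftrightarrow> integrable M (\<lambda>x. f (Y 1 x))"
    if s: "1 \<le> s" and f[measurable]: "f \<in> borel_measurable borel" for s and f :: "real \<Rightarrow> real"
  proof -
    have [measurable]: "Y s \<in> borel_measurable M" using Y_meas s by simp
    have "integrable M (\<lambda>x. f (Y s x)) \<longleftrightarrow> integrable (distr M borel (Y s)) f"
      by (simp add: integrable_distr_eq)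
    also have "\<dots> \<longleftrightarrow> integrable (distr M borel (Y 1)) f" using Y_ident[OF s] by simp
    also have "\<dots> \<longleftrightarrow> integrable M (\<lambda>x. f (Y 1 x))"
      by (simp add: integrable_distr_eq)
    finally show ?thesis .
  qed
  have tr_integral: "expectation (\<lambda>x. f (Y s x)) = expectation (\<lambda>x. f (Y 1 x))"
    if s: "1 \<le> s" and f[measurable]: "f \<in> borel_measurable borel" for s and f :: "real \<Rightarrow> real"
  proof -
    have [measurable]: "Y s \<in> borel_measurable M" using Y_meas s by simp
    have "expectation (\<lambda>x. f (Y s x)) = integral\<^sup>L (distr M borel (Y s)) f"
      by (simp add: integral_distr)
    also have "\<dots> = integral\<^sup>L (distr M borel (Y 1)) f" using Y_ident[OF s] by simp
    also have "\<dots> = expectation (\<lambda>x. f (Y 1 x))"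
      by (simp add: integral_distr)
    finally show ?thesis .
  qed
  have Ysq1: "expectation (\<lambda>x. (Y 1 x)^2) = 1" using Y_var Y_mean by simp
  have Yi: "integrable M (Y s)" if "1 \<le> s" for s
    using tr_int[OF that, of "\<lambda>y. y"] Y_int by simp
  have Yi2: "integrable M (\<lambda>x. (Y s x)^2)" if "1 \<le> s" for s
    using tr_int[OF that, of "\<lambda>y. y^2"] Y_sq_int by simp
  have Ye: "expectation (Y s) = 0" if "1 \<le> s" for s
    using tr_integral[OF that, of "\<lambda>y. y"] Y_mean by simp
  have Ye2: "expectation (\<lambda>x. (Y s x)^2) = 1" if "1 \<le> s" for s
    using tr_integral[OF that, of "\<lambda>y. y^2"] Ysq1 by simp
  have Yind: "indep_vars (\<lambda>_. borel) Y {1..}" using Y_indep by simp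

  have clsum: "(\<Sum>s\<in>{1..N}. (cl s)^2) \<le> L" for N
  proof -
    have lim: "(\<lambda>n. \<Sum>s\<in>{1..N}. (c s n)^2) \<longlonglongrightarrow> (\<Sum>s\<in>{1..N}. (cl s)^2)"
      by (intro tendsto_sum tendsto_power c_lim) auto
    have "eventually (\<lambda>n. N \<le> r n) sequentially" using r_lim by (simp add: filterlim_at_top)
    then obtain N0 where N0: "\<And>n. n \<ge> N0 \<Longrightarrow> N \<le> r n" by (auto simp: eventually_sequentially)
    have "\<forall>n\<ge>N0. (\<Sum>s\<in>{1..N}. (c s n)^2) \<le> L"
    proof (intro allI impI)
      fix n assume "n \<ge> N0"
      then have "N \<le> r n" by (rule N0)
      then have "(\<Sum>s\<in>{1..N}. (c s n)^2) \<le> (\<Sum>s\<in>{1..r n}. (c s n)^2)" by (intro sum_mono2) auto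
      also have "\<dots> \<le> L" by (rule sum_bound)
      finally show "(\<Sum>s\<in>{1..N}. (c s n)^2) \<le> L" .
    qed
    then show ?thesis by (intro LIMSEQ_le_const2[OF lim]) blast
  qed
  have clsumm: "summable (\<lambda>i. (cl (Suc i))^2)"
  proof (rule summableI_nonneg_bounded[where x=L])
    show "0 \<le> (cl (Suc i))^2" for i by simp
    show "(\<Sum>i<n. (cl (Suc i))^2) \<le> L" for n
      using sum_Suc_reindex[of "\<lambda>s. (cl s)^2" n] clsum[of n] by simp
  qed

  define Z where "Z = (\<lambda>i x. cl i * Y i x)"
  have Zind: "indep_vars (\<lambda>_. borel) Z {1..}"
    unfolding Z_def by (rule indep_vars_compose2[where X=Y, OF Yind]) simp
  have AEsum: "AE x in M. summable (\<lambda>s. cl (Suc s) * Y (Suc s) x)"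
  proof -
    have "AE x in M. summable (\<lambda>s. Z (Suc s) x)"
    proof (rule kolmogorov_as[OF Zind])
      show "integrable M (\<lambda>x. (Z i x)^2)" if "i \<in> {1..}" for i
        using Yi2[of i] that by (simp add: Z_def power_mult_distrib)
      show "expectation (Z i) = 0" if "i \<in> {1..}" for i
        using Ye[of i] that by (simp add: Z_def)
      show "Suc i \<in> {1..}" for i by simp
      have "expectation (\<lambda>x. (Z (Suc i) x)^2) = (cl (Suc i))^2" for i
        using Ye2[of "Suc i"] by (simp add: Z_def power_mult_distrib)
      then show "summable (\<lambda>i. expectation (\<lambda>x. (Z (Suc i) x)^2))" using clsumm by simp
    qed
    then show ?thesis by (simp add: Z_def)
  qed
  define S where "S x = (\<Sum>s. cl (Suc s) * Y (Suc s) x)" for x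
  have Sm[measurable]: "S \<in> borel_measurable M" unfolding S_def by measurable
  define Nr where "Nr = distr std_normal_distribution borel (\<lambda>z. \<rho> * z)"
  have Xm: "(\<lambda>x. \<Sum>s=1..r n. c s n * Y s x) \<in> borel_measurable M" for n
    by (rule borel_measurable_sum) (auto intro!: borel_measurable_times Y_meas)

  have char_n: "char (distr M borel (\<lambda>x. \<Sum>s=1..r n. c s n * Y s x)) t = (\<Prod>s\<in>{1..r n}. \<phi> (t * c s n))" for n t
    unfolding \<phi>_def by (rule char_wsum[OF Yind]) (auto intro!: Yid)

  have main: "(\<lambda>n. \<Prod>s\<in>{1..r n}. \<phi> (t * c s n)) \<longlonglongrightarrow> char (distr M borel S) t * complex_of_real (exp (- ((\<rho> * t)^2) / 2))" for t
  proof -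
    define G where "G = complex_of_real (exp (- ((\<rho> * t)^2) / 2))"
    define Cinf where "Cinf = char (distr M borel S) t"
    define H where "H n K = (\<Prod>s\<in>{1..K}. \<phi> (t * c s n))" for n K
    define Hl where "Hl K = (\<Prod>s\<in>{1..K}. \<phi> (t * cl s))" for K
    define V where "V n K = (\<Sum>s=K+1..r n. (c s n)^2)" for n K
    define Tl where "Tl n K = (\<Prod>s\<in>{K+1..r n}. \<phi> (t * c s n))" for n K
    define eps where "eps K = L * (t^2 / 6 * gfun (Y 1) (\<bar>t\<bar> * sqrt (L / real K)) + t^4 * (L / real K) / 8)" for K
    define f where "f v = complex_of_real (exp (- (t^2) * v / 2))" for v
    have phi1: "cmod (\<phi> u) \<le> 1" for u unfolding \<phi>_def by (rule \<mu>.cmod_char_le_1)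
    have G1: "cmod G \<le> 1" unfolding G_def by simp
    have H1: "cmod (H n K) \<le> 1" for n K unfolding H_def by (rule prod_cmod_le1[OF phi1])
    have fG: "f (\<rho>^2) = G" unfolding f_def G_def by (simp add: power_mult_distrib mult.commute)
    have HlC: "Hl \<longlonglongrightarrow> Cinf"
    proof -
      have lim: "(\<lambda>K. CLINT x|M. iexp (t * (\<Sum>s<K. cl (Suc s) * Y (Suc s) x))) \<longlonglongrightarrow> (CLINT x|M. iexp (t * S x))"
      proof (rule integral_dominated_convergence[where w="\<lambda>_. 1"])
        show "AE x in M. (\<lambda>K. iexp (t * (\<Sum>s<K. cl (Suc s) * Y (Suc s) x))) \<longlonglongrightarrow> iexp (t * S x)"
          using AEsum
        proof (rule eventually_mono)
          fix x assume "summable (\<lambda>s. cl (Suc s) * Y (Suc s) x)"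
          then have "(\<lambda>K. \<Sum>s<K. cl (Suc s) * Y (Suc s) x) \<longlonglongrightarrow> S x"
            unfolding S_def by (rule summable_LIMSEQ)
          then show "(\<lambda>K. iexp (t * (\<Sum>s<K. cl (Suc s) * Y (Suc s) x))) \<longlonglongrightarrow> iexp (t * S x)"
            by (intro tendsto_intros)
        qed
        show "AE x in M. norm (iexp (t * (\<Sum>s<K. cl (Suc s) * Y (Suc s) x))) \<le> 1" for K
          by (intro AE_I2) (simp del: of_real_mult)
      qed measurable
      have Hleq: "Hl K = (CLINT x|M. iexp (t * (\<Sum>s<K. cl (Suc s) * Y (Suc s) x)))" for K
      proof -
        have "Hl K = char (distr M borel (\<lambda>x. \<Sum>s\<in>{1..K}. cl s * Y s x)) t"
          unfolding Hl_def \<phi>_def by (rule char_wsum[OF Yind, symmetric]) (auto intro!: Yid)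
        also have "\<dots> = (CLINT x|M. iexp (t * (\<Sum>s\<in>{1..K}. cl s * Y s x)))"
          by (rule char_distr_eq_int) (auto intro!: borel_measurable_sum borel_measurable_times Y_meas)
        also have "\<dots> = (CLINT x|M. iexp (t * (\<Sum>s<K. cl (Suc s) * Y (Suc s) x)))"
          by (simp only: sum_Suc_reindex[of "\<lambda>s. cl s * Y s _"])
        finally show ?thesis .
      qed
      have Ceq: "Cinf = (CLINT x|M. iexp (t * S x))"
        unfolding Cinf_def by (rule char_distr_eq_int) (rule Sm)
      have Hfun: "Hl = (\<lambda>K. CLINT x|M. iexp (t * (\<Sum>s<K. cl (Suc s) * Y (Suc s) x)))"
        by (rule ext) (rule Hleq)
      show ?thesis unfolding Hfun Ceq by (rule lim)
    qed
    have HH: "(\<lambda>n. H n K) \<longlonglongrightarrow> Hl K" for K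
      unfolding H_def Hl_def \<phi>_def
      by (intro tendsto_prod isCont_tendsto_compose[OF \<mu>.isCont_char] tendsto_mult tendsto_const c_lim) auto
    have chain: "\<bar>c s n\<bar> \<le> \<bar>c j n\<bar>" if "1 \<le> j" "j \<le> s" "s \<le> r n" for j s n
    proof -
      have "s \<le> r n \<longrightarrow> \<bar>c s n\<bar> \<le> \<bar>c j n\<bar>" using \<open>j \<le> s\<close>
      proof (induction s rule: dec_induct)
        case base then show ?case by simp
      next
        case (step m)
        show ?case
        proof
          assume "Suc m \<le> r n"
          then have "\<bar>c (Suc m) n\<bar> \<le> \<bar>c m n\<bar>" using step.hyps \<open>1 \<le> j\<close> by (intro mono_abs) auto
          also have "\<dots> \<le> \<bar>c j n\<bar>" using step.IH \<open>Suc m \<le> r n\<close> by simp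
          finally show "\<bar>c (Suc m) n\<bar> \<le> \<bar>c j n\<bar>" .
        qed
      qed
      then show ?thesis using that by simp
    qed
    have tail: "cmod (Tl n K - f (V n K)) \<le> eps K" if K: "1 \<le> K" "K \<le> r n" for n K
    proof -
      have bq: "(c s n)^2 \<le> L / real K" if s: "s \<in> {K+1..r n}" for s
      proof -
        have "real K * (c s n)^2 = (\<Sum>j\<in>{1..K}. (c s n)^2)" by simp
        also have "\<dots> \<le> (\<Sum>j\<in>{1..K}. (c j n)^2)"
        proof (rule sum_mono)
          fix j assume j: "j \<in> {1..K}"
          then have "\<bar>c s n\<bar> \<le> \<bar>c j n\<bar>" using s by (intro chain) auto
          then show "(c s n)^2 \<le> (c j n)^2" by (simp add: abs_le_square_iff)
        qed
        also have "\<dots> \<le> (\<Sum>j\<in>{1..r n}. (c j n)^2)" using K by (intro sum_mono2) auto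
        also have "\<dots> \<le> L" by (rule sum_bound)
        finally show ?thesis using K by (simp add: pos_le_divide_eq mult.commute)
      qed
      have bL: "(\<Sum>s\<in>{K+1..r n}. (c s n)^2) \<le> L"
      proof -
        have "(\<Sum>s\<in>{K+1..r n}. (c s n)^2) \<le> (\<Sum>s\<in>{1..r n}. (c s n)^2)" using K by (intro sum_mono2) auto
        also have "\<dots> \<le> L" by (rule sum_bound)
        finally show ?thesis .
      qed
      have "cmod ((\<Prod>s\<in>{K+1..r n}. char (distr M borel (Y 1)) (t * c s n)) - complex_of_real (exp (- (t^2) * (\<Sum>s\<in>{K+1..r n}. (c s n)^2) / 2)))
         \<le> L * (t^2 / 6 * gfun (Y 1) (\<bar>t\<bar> * sqrt (L / real K)) + t^4 * (L / real K) / 8)"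
        by (rule tail_bound[OF Y1m Y_int Y_sq_int Y_mean Y_var finite_atLeastAtMost bq _ bL]) (use L_pos in auto)
      then show ?thesis unfolding Tl_def f_def V_def eps_def \<phi>_def \<mu>_def .
    qed
    have eps0: "eps \<longlonglongrightarrow> 0"
    proof -
      have q0: "(\<lambda>K. L / real K) \<longlonglongrightarrow> 0"
        by (intro tendsto_divide_0[OF tendsto_const] filterlim_at_top_imp_at_infinity[OF filterlim_real_sequentially])
      then have d0: "(\<lambda>K. \<bar>t\<bar> * sqrt (L / real K)) \<longlonglongrightarrow> \<bar>t\<bar> * sqrt 0"
        by (intro tendsto_intros)
      have "(\<lambda>K. gfun (Y 1) (\<bar>t\<bar> * sqrt (L / real K))) \<longlonglongrightarrow> 0"
        by (rule gfun_lim[OF Y1m Y_sq_int]) (use d0 L_pos in auto)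
      then have "eps \<longlonglongrightarrow> L * (t^2 / 6 * 0 + t^4 * 0 / 8)"
        unfolding eps_def by (intro tendsto_intros q0) simp_all
      then show ?thesis by simp
    qed
    have Vclose: "eventually (\<lambda>K. eventually (\<lambda>n. \<bar>V n K - \<rho>^2\<bar> < d) sequentially) sequentially" if d: "d > 0" for d
    proof -
      have A: "eventually (\<lambda>K. limsup (\<lambda>n. ereal (V n K)) < ereal (\<rho>^2 + d)) sequentially"
        using order_tendstoD(2)[OF tail_limsup, of "ereal (\<rho>^2 + d)"] d unfolding V_def by simp
      have B: "eventually (\<lambda>K. ereal (\<rho>^2 - d) < liminf (\<lambda>n. ereal (V n K))) sequentially"
        using order_tendstoD(1)[OF tail_liminf, of "ereal (\<rho>^2 - d)"] d unfolding V_def by simp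
      show ?thesis
        using A B
      proof eventually_elim
        case (elim K)
        have "eventually (\<lambda>n. ereal (V n K) < ereal (\<rho>^2 + d)) sequentially"
          using elim(1) by (rule Limsup_lessD)
        moreover have "eventually (\<lambda>n. ereal (\<rho>^2 - d) < ereal (V n K)) sequentially"
          using elim(2) by (rule less_LiminfD)
        ultimately show ?case by eventually_elim auto
      qed
    qed
    have split: "(\<Prod>s\<in>{1..r n}. \<phi> (t * c s n)) = H n K * Tl n K" if "K \<le> r n" for n K
    proof -
      have "{1..r n} = {1..K} \<union> {K+1..r n}" using that by auto
      then show ?thesis unfolding H_def Tl_def by (simp add: prod.union_disjoint[symmetric] ivl_disj_int)
    qed
    show ?thesis unfolding G_def[symmetric] Cinf_def[symmetric]
    proof (rule LIMSEQ_I)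
      fix e :: real assume e: "0 < e"
      have fc: "isCont f (\<rho>^2)" unfolding f_def by (intro continuous_intros) auto
      obtain \<delta> where \<delta>: "\<delta> > 0" "\<And>v. v \<noteq> \<rho>^2 \<and> norm (v - \<rho>^2) < \<delta> \<longrightarrow> norm (f v - f (\<rho>^2)) < e/4"
        using LIM_D[OF fc[unfolded isCont_def], of "e/4"] e by auto
      have fclose: "cmod (f v - G) < e/4" if "\<bar>v - \<rho>^2\<bar> < \<delta>" for v
      proof (cases "v = \<rho>^2")
        case True then show ?thesis using e fG by simp
      next
        case False then show ?thesis using \<delta>(2)[of v] that fG by simp
      qed
      have ev1: "eventually (\<lambda>K. eps K < e/4) sequentially"
        using order_tendstoD(2)[OF eps0, of "e/4"] e by simp
      have ev2: "eventually (\<lambda>K. cmod (Hl K - Cinf) < e/4) sequentially"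
        using HlC[unfolded tendsto_iff dist_norm, rule_format, of "e/4"] e by simp
      have ev4: "eventually (\<lambda>K. 1 \<le> K) sequentially" by (rule eventually_ge_at_top)
      have "eventually (\<lambda>K. eps K < e/4 \<and> cmod (Hl K - Cinf) < e/4 \<and> eventually (\<lambda>n. \<bar>V n K - \<rho>^2\<bar> < \<delta>) sequentially \<and> 1 \<le> K) sequentially"
        using ev1 ev2 Vclose[OF \<delta>(1)] ev4 by eventually_elim auto
      then obtain K where K: "eps K < e/4" "cmod (Hl K - Cinf) < e/4" "eventually (\<lambda>n. \<bar>V n K - \<rho>^2\<bar> < \<delta>) sequentially" "1 \<le> K"
        unfolding eventually_sequentially by blast
      have evr: "eventually (\<lambda>n. K \<le> r n) sequentially" using r_lim by (simp add: filterlim_at_top)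
      have evH: "eventually (\<lambda>n. cmod (H n K - Hl K) < e/4) sequentially"
        using HH[of K, unfolded tendsto_iff dist_norm, rule_format, of "e/4"] e by simp
      have "eventually (\<lambda>n. K \<le> r n \<and> cmod (H n K - Hl K) < e/4 \<and> \<bar>V n K - \<rho>^2\<bar> < \<delta>) sequentially"
        using evr evH K(3) by eventually_elim auto
      then obtain N where N: "\<And>n. n \<ge> N \<Longrightarrow> K \<le> r n \<and> cmod (H n K - Hl K) < e/4 \<and> \<bar>V n K - \<rho>^2\<bar> < \<delta>"
        unfolding eventually_sequentially by blast
      show "\<exists>no. \<forall>n\<ge>no. norm ((\<Prod>s\<in>{1..r n}. \<phi> (t * c s n)) - Cinf * G) < e"
      proof (intro exI allI impI)
        fix n assume n: "n \<ge> N"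
        note Nn = N[OF n]
        have "cmod (H n K * Tl n K - Cinf * G) < 4 * (e/4)"
        proof (rule four_bound[OF H1 G1])
          show "cmod (Tl n K - f (V n K)) < e/4" using tail[OF K(4)] Nn K(1) by fastforce
          show "cmod (f (V n K) - G) < e/4" using fclose Nn by blast
          show "cmod (H n K - Hl K) < e/4" using Nn by blast
          show "cmod (Hl K - Cinf) < e/4" using K(2) .
        qed
        then show "norm ((\<Prod>s\<in>{1..r n}. \<phi> (t * c s n)) - Cinf * G) < e"
          using split[of K n] Nn by simp
      qed
    qed
  qed

  have wc: "weak_conv_m (\<lambda>n. distr M borel (\<lambda>x. \<Sum>s=1..r n. c s n * Y s x)) (distr M borel S \<star> Nr)"
  proof (rule levy_continuity)
    show "real_distribution (distr M borel (\<lambda>x. \<Sum>s=1..r n. c s n * Y s x))" for n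
      using Xm by simp
    show "real_distribution (distr M borel S \<star> Nr)"
      unfolding Nr_def by (intro real_distribution_convolution real_distribution_scaled_normal) simp
    fix t
    have "char (distr M borel S \<star> Nr) t = char (distr M borel S) t * complex_of_real (exp (- ((\<rho> * t)^2) / 2))"
      unfolding Nr_def by (subst char_convolution) (auto simp: char_scaled_normal real_distribution_scaled_normal)
    then show "(\<lambda>n. char (distr M borel (\<lambda>x. \<Sum>s=1..r n. c s n * Y s x)) t) \<longlonglongrightarrow> char (distr M borel S \<star> Nr) t"
      unfolding char_n using main[of t] by simp
  qed
  show ?thesis
    using AEsum Sm wc unfolding S_def[abs_def] Nr_def by simp
qed

end
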